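(* If $A,B\in\mathcal T_{n,d}$ are block Toeplitz matrices with $A\intercal B$, then $\mathbf E_i(A)\intercal\mathbf E_j(B)$ for all $i,j\in\{0,\dots,n-1\}$.
   Context: $\mathcal T_{n,d}$ is the set of $n\times n$ block Toeplitz matrices $A=(A_{i-j})_{i,j=0}^{n-1}$ with entries $A_m\in\mathcal M_d(\mathbb C)$. For block Toeplitz $A,B$, write $A\intercal B$ if $AB$ is block Toeplitz. For $k=0,\dots,n-1$, $\mathbf E_k$ is the map on $n\times n$ block matrices such that the $(i,j)$ block entry of $\mathbf E_k(T)$ equals $T_{i,j}$ if $i-j=k$ or $i-j=k-n$, and $0$ otherwise. *)

theory Defs
  imports "HOL-Analysis.Analysis"
begin

text \<open>An n x n block matrix with d x d complex blocks is represented as a function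
  T :: nat => nat => complex^'d^'d; only the entries T i j with i, j < n matter.\<close>

type_synonym 'd bmat = "nat \<Rightarrow> nat \<Rightarrow> complex^'d^'d"

definition bmult :: "nat \<Rightarrow> 'd::finite bmat \<Rightarrow> 'd bmat \<Rightarrow> 'd bmat" where
  "bmult n A B = (\<lambda>i j. \<Sum>k<n. A i k ** B k j)"

definition block_toeplitz :: "nat \<Rightarrow> 'd::finite bmat \<Rightarrow> bool" where
  "block_toeplitz n T \<longleftrightarrow>
     (\<exists>a :: int \<Rightarrow> complex^'d^'d. \<forall>i<n. \<forall>j<n. T i j = a (int i - int j))"

definition toep_comm :: "nat \<Rightarrow> 'd::finite bmat \<Rightarrow> 'd bmat \<Rightarrow> bool" where
  "toep_comm n A B \<longleftrightarrow> block_toeplitz n A \<and> block_toeplitz n B \<and> block_toeplitz n (bmult n A B)"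

definition Ek :: "nat \<Rightarrow> nat \<Rightarrow> 'd::finite bmat \<Rightarrow> 'd bmat" where
  "Ek n k T = (\<lambda>i j. if i < n \<and> j < n \<and> (int i - int j = int k \<or> int i - int j = int k - int n)
                      then T i j else 0)"

end

theory Submission
  imports Defs
begin

definition shiftp :: "nat \<Rightarrow> 'd::finite bmat \<Rightarrow> bool" where
  "shiftp n T \<longleftrightarrow> (\<forall>i j. Suc i < n \<longrightarrow> Suc j < n \<longrightarrow> T (Suc i) (Suc j) = T i j)"

lemma toep_iff: "block_toeplitz n T \<longleftrightarrow> shiftp n T"
proof
  assume "block_toeplitz n T"
  then obtain a where a: "\<forall>i<n. \<forall>j<n. T i j = a (int i - int j)"
    unfolding block_toeplitz_def by blast
  show "shiftp n T" unfolding shiftp_def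
  proof (intro allI impI)
    fix i j assume "Suc i < n" "Suc j < n"
    then show "T (Suc i) (Suc j) = T i j" using a by simp
  qed
next
  assume s: "shiftp n T"
  have diag: "\<And>i j. i + k < n \<Longrightarrow> j + k < n \<Longrightarrow> T (i + k) (j + k) = T i j" for k
  proof (induction k)
    case 0 then show ?case by simp
  next
    case (Suc k)
    have "T (i + Suc k) (j + Suc k) = T (Suc (i + k)) (Suc (j + k))" by simp
    also have "\<dots> = T (i + k) (j + k)" using s Suc.prems unfolding shiftp_def by simp
    also have "\<dots> = T i j" using Suc by simp
    finally show ?case .
  qed
  define a where "a m = (if m \<ge> 0 then T (nat m) 0 else T 0 (nat (-m)))" for m :: int
  have "\<forall>i<n. \<forall>j<n. T i j = a (int i - int j)"
  proof (intro allI impI)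
    fix i j assume ij: "i < n" "j < n"
    show "T i j = a (int i - int j)"
    proof (cases "j \<le> i")
      case True
      have "T i j = T ((i - j) + j) (0 + j)" using True by simp
      also have "\<dots> = T (i - j) 0" using diag[of "i - j" j "0"] True ij by simp
      finally show ?thesis using True unfolding a_def by (simp add: nat_diff_distrib)
    next
      case False
      have "T i j = T (0 + i) ((j - i) + i)" using False by simp
      also have "\<dots> = T 0 (j - i)" using diag[of 0 i "j - i"] False ij by simp
      finally show ?thesis using False unfolding a_def by (simp add: nat_diff_distrib)
    qed
  qed
  then show "block_toeplitz n T" unfolding block_toeplitz_def by blast
qed

lemma mult_shift:
  assumes A: "shiftp n A" and B: "shiftp n B" and i: "Suc i < n" and j: "Suc j < n"
  shows "bmult n A B (Suc i) (Suc j) + A i (n - 1) ** B (n - 1) j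
       = bmult n A B i j + A (Suc i) 0 ** B 0 (Suc j)"
proof -
  obtain m where n: "n = Suc m" using i by (cases n) auto
  have s: "(\<Sum>k<m. A (Suc i) (Suc k) ** B (Suc k) (Suc j)) = (\<Sum>k<m. A i k ** B k j)"
  proof (rule sum.cong)
    fix k assume "k \<in> {..<m}"
    then have "Suc k < n" using n by simp
    then show "A (Suc i) (Suc k) ** B (Suc k) (Suc j) = A i k ** B k j"
      using A B i j unfolding shiftp_def by simp
  qed simp
  have "bmult n A B (Suc i) (Suc j) = A (Suc i) 0 ** B 0 (Suc j) + (\<Sum>k<m. A i k ** B k j)"
    unfolding bmult_def n sum.lessThan_Suc_shift using s by simp
  moreover have "bmult n A B i j = (\<Sum>k<m. A i k ** B k j) + A i m ** B m j"
    unfolding bmult_def n by simp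
  ultimately show ?thesis using n by (simp add: algebra_simps)
qed

lemma prod_toep_iff:
  assumes A: "shiftp n A" and B: "shiftp n B"
  shows "shiftp n (bmult n A B) \<longleftrightarrow>
    (\<forall>i j. Suc i < n \<longrightarrow> Suc j < n \<longrightarrow> A (Suc i) 0 ** B 0 (Suc j) = A i (n - 1) ** B (n - 1) j)"
proof -
  have "\<And>i j. Suc i < n \<Longrightarrow> Suc j < n \<Longrightarrow>
     (bmult n A B (Suc i) (Suc j) = bmult n A B i j) \<longleftrightarrow>
     (A (Suc i) 0 ** B 0 (Suc j) = A i (n - 1) ** B (n - 1) j)"
  proof -
    fix i j assume "Suc i < n" "Suc j < n"
    from mult_shift[OF A B this] show "?thesis i j"
      by (metis add_left_cancel add.commute)
  qed
  then show ?thesis unfolding shiftp_def by blast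
qed

lemma Ek_shift:
  assumes "shiftp n T" shows "shiftp n (Ek n k T)"
  using assms unfolding shiftp_def Ek_def by auto

theorem lemma4p1:
  fixes A B :: "'d::finite bmat" and n :: nat
  assumes "toep_comm n A B"
  shows "\<forall>i<n. \<forall>j<n. toep_comm n (Ek n i A) (Ek n j B)"
proof (intro allI impI)
  fix k l assume k: "k < n" and l: "l < n"
  have A: "shiftp n A" and B: "shiftp n B" and AB: "shiftp n (bmult n A B)"
    using assms unfolding toep_comm_def toep_iff by auto
  have C: "\<And>i j. Suc i < n \<Longrightarrow> Suc j < n \<Longrightarrow> A (Suc i) 0 ** B 0 (Suc j) = A i (n - 1) ** B (n - 1) j"
    using prod_toep_iff[OF A B] AB by blast
  have A': "shiftp n (Ek n k A)" and B': "shiftp n (Ek n l B)" using Ek_shift A B by auto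
  have "shiftp n (bmult n (Ek n k A) (Ek n l B))"
    unfolding prod_toep_iff[OF A' B']
  proof (intro allI impI)
    fix i j assume i: "Suc i < n" and j: "Suc j < n"
    show "Ek n k A (Suc i) 0 ** Ek n l B 0 (Suc j) = Ek n k A i (n - 1) ** Ek n l B (n - 1) j"
    proof (cases "Suc i = k \<and> Suc j = n - l")
      case True
      then have e1: "Ek n k A (Suc i) 0 = A (Suc i) 0" "Ek n l B 0 (Suc j) = B 0 (Suc j)"
        "Ek n k A i (n - 1) = A i (n - 1)" "Ek n l B (n - 1) j = B (n - 1) j"
        using i j k l unfolding Ek_def by auto
      show ?thesis using C[OF i j] e1 by simp
    next
      case False
      then have "Suc i \<noteq> k \<or> Suc j \<noteq> n - l" by blast
      then show ?thesis
      proof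
        assume "Suc i \<noteq> k"
        then have "Ek n k A (Suc i) 0 = 0" "Ek n k A i (n - 1) = 0"
          using i j k unfolding Ek_def by auto
        then show ?thesis by simp
      next
        assume "Suc j \<noteq> n - l"
        then have "Ek n l B 0 (Suc j) = 0" "Ek n l B (n - 1) j = 0"
          using i j l unfolding Ek_def by auto
        then show ?thesis by simp
      qed
    qed
  qed
  then show "toep_comm n (Ek n k A) (Ek n l B)"
    unfolding toep_comm_def toep_iff using A' B' by blast
qed

end
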